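(* Suppose there is a polynomial $p_2$ such that for every $d\ge 2$, every Boolean matrix $M\in\{0,1\}^{n\times m}$ ($n,m\ge1$) of rank at most $d$ contains a submatrix $M|_{S\times T}$ ($S\subseteq[n]$, $T\subseteq[m]$) in which every column is constant and $|S||T|\ge nm\cdot 2^{-p_2(\log d)}$. Then for every integer $k\ge 2$ there is a polynomial $p_k$ such that for every $d\ge 2$, every $k$-listable real matrix $M\in\mathbb R^{n\times m}$ of rank at most $d$ contains a $1$-listable submatrix $M|_{S\times T}$ with $|S||T|\ge nm\cdot 2^{-p_k(\log d)}$.
   Context: A real matrix is $k$-listable if every column contains at most $k$ distinct entries; $1$-listable means every column is constant. For $S\subseteq[n]$, $T\subseteq[m]$, $M|_{S\times T}$ is the submatrix with rows $S$ and columns $T$, of size $|S||T|$. Logarithms are base 2. *)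

theory Defs
  imports "Jordan_Normal_Form.DL_Rank" "HOL-Computational_Algebra.Polynomial"
begin

definition mrank :: "real mat \<Rightarrow> nat" where
  "mrank M = vec_space.rank (dim_row M) M"

definition listable :: "nat \<Rightarrow> real mat \<Rightarrow> bool" where
  "listable k M \<longleftrightarrow> (\<forall>j < dim_col M. card {M $$ (i, j) | i. i < dim_row M} \<le> k)"

definition sub_listable1 :: "real mat \<Rightarrow> nat set \<Rightarrow> nat set \<Rightarrow> bool" where
  "sub_listable1 M S T \<longleftrightarrow> (\<forall>j\<in>T. \<forall>i\<in>S. \<forall>i'\<in>S. M $$ (i, j) = M $$ (i', j))"

definition boolean_mat :: "real mat \<Rightarrow> bool" where
  "boolean_mat M \<longleftrightarrow> (\<forall>i < dim_row M. \<forall>j < dim_col M. M $$ (i, j) \<in> {0, 1})"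

end

theory Submission
  imports Defs
begin

definition lowrank :: "nat \<Rightarrow> nat set \<Rightarrow> nat set \<Rightarrow> (nat \<Rightarrow> nat \<Rightarrow> real) \<Rightarrow> bool" where
  "lowrank r R C F \<longleftrightarrow> (\<exists>U V. \<forall>i\<in>R. \<forall>j\<in>C. F i j = (\<Sum>l<r. U i l * V l j))"

lemma lowrank_cong:
  assumes "lowrank r R C F" "\<And>i j. i \<in> R \<Longrightarrow> j \<in> C \<Longrightarrow> G i j = F i j"
  shows "lowrank r R C G"
  using assms unfolding lowrank_def by metis

lemma lowrank_sub:
  assumes "lowrank r R C F" "R' \<subseteq> R" "C' \<subseteq> C"
  shows "lowrank r R' C' F"
  using assms unfolding lowrank_def by blast

lemma lowrank_mono:
  assumes "lowrank r R C F" "r \<le> r'"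
  shows "lowrank r' R C F"
proof -
  obtain U V where UV: "\<forall>i\<in>R. \<forall>j\<in>C. F i j = (\<Sum>l<r. U i l * V l j)"
    using assms unfolding lowrank_def by blast
  define U' where "U' i l = (if l < r then U i l else 0)" for i l
  have "(\<Sum>l<r'. U' i l * V l j) = (\<Sum>l<r. U i l * V l j)" for i j
  proof -
    have "(\<Sum>l<r'. U' i l * V l j) = (\<Sum>l<r. U' i l * V l j)"
      by (rule sum.mono_neutral_right) (use assms(2) in \<open>auto simp: U'_def\<close>)
    also have "\<dots> = (\<Sum>l<r. U i l * V l j)" by (simp add: U'_def)
    finally show ?thesis .
  qed
  then show ?thesis using UV unfolding lowrank_def by metis
qed

lemma lowrank_scale:
  assumes "lowrank r R C F"
  shows "lowrank r R C (\<lambda>i j. c j * F i j)"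
proof -
  obtain U V where UV: "\<forall>i\<in>R. \<forall>j\<in>C. F i j = (\<Sum>l<r. U i l * V l j)"
    using assms unfolding lowrank_def by blast
  have "\<forall>i\<in>R. \<forall>j\<in>C. c j * F i j = (\<Sum>l<r. U i l * (c j * V l j))"
    using UV by (simp add: sum_distrib_left mult.left_commute)
  then show ?thesis unfolding lowrank_def by (intro exI[of _ U] exI[of _ "\<lambda>l j. c j * V l j"])
qed

lemma bij_divmod: "bij_betw (\<lambda>q. (q div s, q mod s)) {..<r*s} ({..<r}\<times>{..<(s::nat)})"
proof (cases "s = 0")
  case True then show ?thesis by (simp add: bij_betw_def)
next
  case False
  show ?thesis unfolding bij_betw_def
  proof
    show "inj_on (\<lambda>q. (q div s, q mod s)) {..<r * s}"
      by (intro inj_onI) (metis div_mod_decomp prod.inject)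
    show "(\<lambda>q. (q div s, q mod s)) ` {..<r * s} = {..<r} \<times> {..<s}"
    proof
      show "(\<lambda>q. (q div s, q mod s)) ` {..<r * s} \<subseteq> {..<r} \<times> {..<s}"
        using False by (auto simp: less_mult_imp_div_less)
      show "{..<r} \<times> {..<s} \<subseteq> (\<lambda>q. (q div s, q mod s)) ` {..<r * s}"
      proof
        fix p assume p: "p \<in> {..<r} \<times> {..<s}"
        then obtain a b where ab: "p = (a, b)" "a < r" "b < s" by auto
        have "a * s + b < r * s"
          by (metis ab(2,3) add.commute mult.commute nat_add_left_cancel_less nat_mult_less_cancel_disj
              less_imp_le_nat add_mult_distrib trans_less_add1 mult_Suc linorder_not_le not_less_eq_eq
              order_less_le_trans)
        moreover have "((a*s+b) div s, (a*s+b) mod s) = p" using ab False by simp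
        ultimately show "p \<in> (\<lambda>q. (q div s, q mod s)) ` {..<r * s}" by force
      qed
    qed
  qed
qed

lemma lowrank_mult:
  assumes "lowrank r R C F" "lowrank s R C G"
  shows "lowrank (r*s) R C (\<lambda>i j. F i j * G i j)"
proof -
  obtain U V where UV: "\<forall>i\<in>R. \<forall>j\<in>C. F i j = (\<Sum>l<r. U i l * V l j)"
    using assms unfolding lowrank_def by blast
  obtain U' V' where UV': "\<forall>i\<in>R. \<forall>j\<in>C. G i j = (\<Sum>l<s. U' i l * V' l j)"
    using assms unfolding lowrank_def by blast
  define U2 where "U2 i q = U i (q div s) * U' i (q mod s)" for i q
  define V2 where "V2 q j = V (q div s) j * V' (q mod s) j" for q j
  have "F i j * G i j = (\<Sum>q<r*s. U2 i q * V2 q j)" if "i \<in> R" "j \<in> C" for i j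
  proof -
    have "F i j * G i j = (\<Sum>l<r. \<Sum>l'<s. (U i l * V l j) * (U' i l' * V' l' j))"
      using UV UV' that by (simp add: sum_product)
    also have "\<dots> = (\<Sum>p\<in>{..<r}\<times>{..<s}. (U i (fst p) * V (fst p) j) * (U' i (snd p) * V' (snd p) j))"
      by (simp add: sum.cartesian_product case_prod_beta)
    also have "\<dots> = (\<Sum>q<r*s. U2 i q * V2 q j)"
      using sum.reindex_bij_betw[OF bij_divmod[of s r], of "\<lambda>p. (U i (fst p) * V (fst p) j) * (U' i (snd p) * V' (snd p) j)", symmetric]
      by (simp add: U2_def V2_def mult_ac)
    finally show ?thesis .
  qed
  then show ?thesis unfolding lowrank_def by blast
qed

lemma lowrank_factor:
  assumes "lowrank d R C F"
  shows "lowrank (Suc d) R C (\<lambda>i j. if E j then 1 else F i j - w j)"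
proof -
  obtain U V where UV: "\<forall>i\<in>R. \<forall>j\<in>C. F i j = (\<Sum>l<d. U i l * V l j)"
    using assms unfolding lowrank_def by blast
  define U' where "U' i l = (if l < d then U i l else 1)" for i l
  define V' where "V' l j = (if l < d then (if E j then 0 else V l j) else (if E j then 1 else - w j))" for l j
  have "(if E j then 1 else F i j - w j) = (\<Sum>l<Suc d. U' i l * V' l j)" if "i\<in>R" "j\<in>C" for i j
    using UV that by (simp add: U'_def V'_def)
  then show ?thesis unfolding lowrank_def by blast
qed

lemma lowrank_prod:
  assumes "lowrank d R C F"
  shows "(\<forall>j\<in>C. finite (W j) \<and> card (W j) \<le> t) \<Longrightarrow>
    lowrank ((Suc d)^t) R C (\<lambda>i j. \<Prod>w\<in>W j. (F i j - w))"
proof (induction t arbitrary: W)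
  case 0
  then have "\<forall>j\<in>C. W j = {}" by auto
  then have "\<forall>i\<in>R. \<forall>j\<in>C. (\<Prod>w\<in>W j. (F i j - w)) = (\<Sum>l<(Suc d)^0. (\<lambda>i l. 1) i l * (\<lambda>l j. 1) l j)"
    by simp
  then show ?case unfolding lowrank_def by (intro exI[of _ "\<lambda>i l. 1"] exI[of _ "\<lambda>l j. 1"])
next
  case (Suc t)
  define E where "E j = (W j = {})" for j
  define w where "w j = (SOME x. x \<in> W j)" for j
  define W' where "W' j = W j - {w j}" for j
  have "\<forall>j\<in>C. finite (W' j) \<and> card (W' j) \<le> t"
  proof
    fix j assume j: "j \<in> C"
    show "finite (W' j) \<and> card (W' j) \<le> t"
    proof (cases "W j = {}")
      case True then show ?thesis by (simp add: W'_def)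
    next
      case False
      then have "w j \<in> W j" unfolding w_def by (simp add: some_in_eq)
      then show ?thesis using Suc.prems j by (auto simp: W'_def)
    qed
  qed
  from Suc.IH[OF this] have IH: "lowrank ((Suc d)^t) R C (\<lambda>i j. \<Prod>w\<in>W' j. (F i j - w))" .
  have "lowrank (Suc d * (Suc d)^t) R C (\<lambda>i j. (if E j then 1 else F i j - w j) * (\<Prod>w\<in>W' j. (F i j - w)))"
    by (rule lowrank_mult[OF lowrank_factor[OF assms] IH])
  moreover have "(\<Prod>x\<in>W j. (F i j - x)) = (if E j then 1 else F i j - w j) * (\<Prod>x\<in>W' j. (F i j - x))"
    if "j \<in> C" for i j
  proof (cases "W j = {}")
    case True then show ?thesis by (simp add: E_def W'_def)
  next
    case False
    then have "w j \<in> W j" unfolding w_def by (simp add: some_in_eq)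
    then show ?thesis using False Suc.prems that unfolding E_def W'_def
      by (simp add: prod.remove)
  qed
  ultimately show ?case by (auto intro: lowrank_cong)
qed

lemma lowrank_mrank:
  assumes "lowrank r {..<n} {..<m} F"
  shows "mrank (mat n m (\<lambda>(i,j). F i j)) \<le> r"
proof -
  interpret vec_space "TYPE(real)" n .
  obtain U V where UV: "\<forall>i\<in>{..<n}. \<forall>j\<in>{..<m}. F i j = (\<Sum>l<r. U i l * V l j)"
    using assms unfolding lowrank_def by blast
  define Bs where "Bs q = mat n m (\<lambda>(i,j). \<Sum>l<q. U i l * V l j)" for q
  have "rank (Bs q) \<le> q" for q
  proof (induction q)
    case 0
    have "Bs 0 = 0\<^sub>m n m" by (auto simp: Bs_def)
    then show ?case using rank_0I by simp
  next
    case (Suc q)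
    define P where "P = mat n m (\<lambda>(i,j). U i q * V q j)"
    have "Bs (Suc q) = Bs q + P" by (auto simp: Bs_def P_def)
    moreover have "rank P \<le> 1"
      by (rule rank_le_1_product_entries[of P m "\<lambda>i. U i q" "\<lambda>j. V q j"]) (auto simp: P_def)
    moreover have "rank (Bs q + P) \<le> rank (Bs q) + rank P"
      by (rule rank_subadditive) (auto simp: Bs_def P_def)
    ultimately show ?case using Suc.IH by simp
  qed
  moreover have "mat n m (\<lambda>(i,j). F i j) = Bs r" using UV by (auto simp: Bs_def)
  moreover have "dim_row (Bs r) = n" by (simp add: Bs_def)
  ultimately show ?thesis unfolding mrank_def by simp
qed

lemma (in vec_space) rank_lowrank:
  assumes car: "M \<in> carrier_mat n m"
  shows "\<exists>U V. \<forall>i<n. \<forall>j<m. M $$ (i,j) = (\<Sum>l<rank M. U i l * V l j)"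
proof -
  have cols_sub: "set (cols M) \<subseteq> carrier_vec n" using car cols_dim by blast
  have li0: "lin_indpt {}"
    by (metis empty_subsetI fin_dim finite_basis_exists subset_li_is_li vec_vs vectorspace.basis_def)
  obtain S where S: "finite S" "maximal S (\<lambda>T. T \<subseteq> set (cols M) \<and> lin_indpt T)"
    using maximal_exists_superset[of "set (cols M)" "\<lambda>T. T \<subseteq> set (cols M) \<and> lin_indpt T" "{}"] li0
    by auto
  have rk: "rank M = card S" using rank_card_indpt[OF car S(2)] .
  have SM: "S \<subseteq> set (cols M)" "lin_indpt S" using S(2) unfolding maximal_def by auto
  have Sc: "S \<subseteq> carrier_vec n" using SM cols_sub by blast
  have inspan: "col M j \<in> span S" if j: "j < m" for j
  proof (cases "col M j \<in> S")
    case True then show ?thesis using Sc span_mem by blast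
  next
    case False
    have cj: "col M j \<in> set (cols M)" using j car by (simp add: cols_def)
    have "\<not> (S \<union> {col M j} \<subseteq> set (cols M) \<and> lin_indpt (S \<union> {col M j}))"
    proof
      assume "S \<union> {col M j} \<subseteq> set (cols M) \<and> lin_indpt (S \<union> {col M j})"
      then have "S \<union> {col M j} = S" using S(2) unfolding maximal_def by blast
      then show False using False by blast
    qed
    then have "lin_dep (S \<union> {col M j})" using SM cj by blast
    moreover have "col M j \<in> carrier_vec n" using cj cols_sub by blast
    ultimately show ?thesis using lin_dep_iff_in_span[OF Sc SM(2) _ False] by blast
  qed
  have "\<forall>j. \<exists>a A. j < m \<longrightarrow> col M j = lincomb a A \<and> finite A \<and> A \<subseteq> S"
    using inspan in_spanE by blast
  then obtain a AA where aA: "\<And>j. j < m \<Longrightarrow> col M j = lincomb (a j) (AA j) \<and> finite (AA j) \<and> AA j \<subseteq> S"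
    by metis
  obtain e where e: "bij_betw e {0..<card S} S" using ex_bij_betw_nat_finite[OF S(1)] by blast
  define U where "U i l = e l $ i" for i l
  define V where "V l j = (if e l \<in> AA j then a j (e l) else 0)" for l j
  have "M $$ (i,j) = (\<Sum>l<card S. U i l * V l j)" if i: "i < n" and j: "j < m" for i j
  proof -
    have "M $$ (i,j) = col M j $ i" using i j car by auto
    also have "\<dots> = lincomb (a j) (AA j) $ i" using aA[OF j] by metis
    also have "\<dots> = (\<Sum>v\<in>AA j. a j v * v $ i)"
      by (rule lincomb_index[OF i]) (use aA[OF j] Sc in blast)
    also have "\<dots> = (\<Sum>v\<in>S. (if v \<in> AA j then a j v else 0) * v $ i)"
      using aA[OF j] S(1) by (intro sum.mono_neutral_cong_left) auto
    also have "\<dots> = (\<Sum>l\<in>{0..<card S}. (if e l \<in> AA j then a j (e l) else 0) * e l $ i)"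
      using sum.reindex_bij_betw[OF e, of "\<lambda>v. (if v \<in> AA j then a j v else 0) * v $ i"] by simp
    also have "\<dots> = (\<Sum>l<card S. U i l * V l j)"
      by (simp add: U_def V_def atLeast0LessThan mult.commute)
    finally show ?thesis .
  qed
  then show ?thesis unfolding rk by blast
qed

lemma mrank_lowrank:
  assumes "mrank M \<le> d"
  shows "lowrank d {..<dim_row M} {..<dim_col M} (\<lambda>i j. M $$ (i,j))"
proof -
  interpret vec_space "TYPE(real)" "dim_row M" .
  have "\<exists>U V. \<forall>i<dim_row M. \<forall>j<dim_col M. M $$ (i,j) = (\<Sum>l<rank M. U i l * V l j)"
    by (rule rank_lowrank[OF carrier_matI]) (rule refl)+
  then have "lowrank (mrank M) {..<dim_row M} {..<dim_col M} (\<lambda>i j. M $$ (i,j))"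
    unfolding lowrank_def mrank_def by blast
  then show ?thesis using lowrank_mono assms by blast
qed

definition colconst :: "(nat \<Rightarrow> nat \<Rightarrow> real) \<Rightarrow> nat set \<Rightarrow> nat set \<Rightarrow> bool" where
  "colconst F S T \<longleftrightarrow> (\<forall>j\<in>T. \<forall>i\<in>S. \<forall>i'\<in>S. F i j = F i' j)"

definition HF :: "real poly \<Rightarrow> bool" where
  "HF p2 \<longleftrightarrow> (\<forall>D R C F. D \<ge> 2 \<longrightarrow> finite R \<longrightarrow> finite C \<longrightarrow> R \<noteq> {} \<longrightarrow> C \<noteq> {} \<longrightarrow>
     (\<forall>i\<in>R. \<forall>j\<in>C. F i j \<in> {0,1}) \<longrightarrow> lowrank D R C F \<longrightarrow>
     (\<exists>S\<subseteq>R. \<exists>T\<subseteq>C. colconst F S T \<and>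
        real (card S) * real (card T) \<ge> real (card R) * real (card C) * 2 powr (- poly p2 (log 2 D))))"

lemma HF_intro:
  assumes H: "\<forall>d::nat. d \<ge> 2 \<longrightarrow>
      (\<forall>M :: real mat. dim_row M \<ge> 1 \<longrightarrow> dim_col M \<ge> 1 \<longrightarrow> boolean_mat M \<longrightarrow> mrank M \<le> d \<longrightarrow>
        (\<exists>S T. S \<subseteq> {0..<dim_row M} \<and> T \<subseteq> {0..<dim_col M} \<and> sub_listable1 M S T \<and>
           real (card S * card T) \<ge> real (dim_row M * dim_col M) * 2 powr (- poly p2 (log 2 d))))"
  shows "HF p2"
  unfolding HF_def
proof (intro allI impI)
  fix D :: nat and R C :: "nat set" and F
  assume D: "D \<ge> 2" and fR: "finite R" and fC: "finite C" and Rne: "R \<noteq> {}" and Cne: "C \<noteq> {}"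
    and B01: "\<forall>i\<in>R. \<forall>j\<in>C. F i j \<in> {0,1}" and lr: "lowrank D R C F"
  define rs where "rs = sorted_list_of_set R"
  define cs where "cs = sorted_list_of_set C"
  define n where "n = card R"
  define m where "m = card C"
  have rs: "set rs = R" "distinct rs" "length rs = n" using fR by (auto simp: rs_def n_def)
  have cs: "set cs = C" "distinct cs" "length cs = m" using fC by (auto simp: cs_def m_def)
  have rsR: "rs ! i \<in> R" if "i < n" for i using rs that nth_mem by metis
  have csC: "cs ! j \<in> C" if "j < m" for j using cs that nth_mem by metis
  define M where "M = mat n m (\<lambda>(i,j). F (rs!i) (cs!j))"
  have dims: "dim_row M = n" "dim_col M = m" by (auto simp: M_def)
  have n1: "n \<ge> 1" using fR Rne by (simp add: n_def Suc_le_eq card_gt_0_iff)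
  have m1: "m \<ge> 1" using fC Cne by (simp add: m_def Suc_le_eq card_gt_0_iff)
  have Mij: "M $$ (i,j) = F (rs!i) (cs!j)" if "i < n" "j < m" for i j
    using that by (simp add: M_def)
  have bool: "boolean_mat M" unfolding boolean_mat_def dims using Mij B01 rsR csC by auto
  have "lowrank D {..<n} {..<m} (\<lambda>i j. F (rs!i) (cs!j))"
  proof -
    obtain U V where UV: "\<forall>i\<in>R. \<forall>j\<in>C. F i j = (\<Sum>l<D. U i l * V l j)"
      using lr unfolding lowrank_def by blast
    have "\<forall>i\<in>{..<n}. \<forall>j\<in>{..<m}. F (rs!i) (cs!j) = (\<Sum>l<D. U (rs!i) l * V l (cs!j))"
      using UV rsR csC by auto
    then show ?thesis unfolding lowrank_def
      by (intro exI[of _ "\<lambda>i l. U (rs!i) l"] exI[of _ "\<lambda>l j. V l (cs!j)"])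
  qed
  from lowrank_mrank[OF this] have rk: "mrank M \<le> D" by (simp add: M_def)
  from H[rule_format, OF D, of M] n1 m1 bool rk dims obtain S0 T0 where
    ST0: "S0 \<subseteq> {0..<n}" "T0 \<subseteq> {0..<m}" "sub_listable1 M S0 T0"
      "real (card S0 * card T0) \<ge> real (n * m) * 2 powr (- poly p2 (log 2 D))"
    by auto
  define S where "S = (\<lambda>i. rs ! i) ` S0"
  define T where "T = (\<lambda>j. cs ! j) ` T0"
  have injS: "inj_on (\<lambda>i. rs ! i) S0" using ST0(1) rs by (intro inj_on_nth) auto
  have injT: "inj_on (\<lambda>j. cs ! j) T0" using ST0(2) cs by (intro inj_on_nth) auto
  have cS: "card S = card S0" using injS by (simp add: S_def card_image)
  have cT: "card T = card T0" using injT by (simp add: T_def card_image)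
  have "S \<subseteq> R" using ST0(1) rsR by (auto simp: S_def)
  moreover have "T \<subseteq> C" using ST0(2) csC by (auto simp: T_def)
  moreover have "colconst F S T"
    unfolding colconst_def S_def T_def
  proof (intro ballI)
    fix j i i' assume j: "j \<in> (\<lambda>j. cs ! j) ` T0" and i: "i \<in> (\<lambda>i. rs ! i) ` S0"
      and i': "i' \<in> (\<lambda>i. rs ! i) ` S0"
    then obtain j0 i0 i0' where "j = cs ! j0" "j0 \<in> T0" "i = rs ! i0" "i0 \<in> S0" "i' = rs ! i0'" "i0' \<in> S0"
      by auto
    moreover have "i0 < n" "i0' < n" "j0 < m" using calculation ST0(1,2) by auto
    moreover have "M $$ (i0, j0) = M $$ (i0', j0)" using calculation ST0(3) unfolding sub_listable1_def by blast
    ultimately show "F i j = F i' j" using Mij by metis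
  qed
  moreover have "real (card S) * real (card T) \<ge> real (card R) * real (card C) * 2 powr (- poly p2 (log 2 D))"
    using ST0(4) cS cT by (simp add: n_def m_def)
  ultimately show "\<exists>S\<subseteq>R. \<exists>T\<subseteq>C. colconst F S T \<and>
        real (card S) * real (card T) \<ge> real (card R) * real (card C) * 2 powr (- poly p2 (log 2 D))"
    by blast
qed

lemma main_ind:
  fixes p2 :: "real poly" and Q :: real and d k :: nat
  assumes H: "HF p2" and Q1: "Q \<ge> 1" and d1: "d \<ge> 1"
    and Qb: "\<And>j. 1 \<le> j \<Longrightarrow> j \<le> k \<Longrightarrow> poly p2 (log 2 (real (Suc d ^ j))) \<le> Q - 1"
  shows "j \<le> k \<Longrightarrow> finite R \<Longrightarrow> finite C \<Longrightarrow> R \<noteq> {} \<Longrightarrow> C \<noteq> {} \<Longrightarrow> lowrank d R C F \<Longrightarrow>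
    (\<forall>c\<in>C. card ((\<lambda>i. F i c) ` R) \<le> j) \<Longrightarrow>
    \<exists>S\<subseteq>R. \<exists>T\<subseteq>C. colconst F S T \<and>
      real (card S) * real (card T) \<ge> real (card R) * real (card C) * 2 powr (- (real j * Q))"
proof (induction j arbitrary: R C)
  case 0
  then obtain c where "c \<in> C" by blast
  with 0 have "card ((\<lambda>i. F i c) ` R) = 0" by auto
  with 0 show ?case by simp
next
  case (Suc j)
  obtain i0 where i0: "i0 \<in> R" using Suc.prems by blast
  define v where "v c = F i0 c" for c
  define W where "W c = (\<lambda>i. F i c) ` R - {v c}" for c
  have fW: "finite (W c)" for c using Suc.prems by (simp add: W_def)
  have cW: "card (W c) \<le> j" if "c \<in> C" for c
  proof -
    have "v c \<in> (\<lambda>i. F i c) ` R" using i0 by (simp add: v_def)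
    then have "card (W c) = card ((\<lambda>i. F i c) ` R) - 1"
      using Suc.prems by (simp add: W_def card_Diff_singleton)
    then show ?thesis using Suc.prems(7) that by fastforce
  qed
  define num where "num i c = (\<Prod>w\<in>W c. (F i c - w))" for i c
  define den where "den c = (\<Prod>w\<in>W c. (v c - w))" for c
  define B where "B i c = (1 / den c) * num i c" for i c
  have den0: "den c \<noteq> 0" for c
    unfolding den_def using fW by (simp add: W_def)
  have B1: "B i c = 1" if "F i c = v c" for i c
    using that den0 by (simp add: B_def num_def den_def)
  have B0: "B i c = 0" if "i \<in> R" "F i c \<noteq> v c" for i c
  proof -
    have "F i c \<in> W c" using that by (simp add: W_def)
    then have "num i c = 0" using fW unfolding num_def by (intro prod_zero) auto
    then show ?thesis by (simp add: B_def)
  qed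
  define D where "D = Suc d ^ Suc j"
  have D2: "D \<ge> 2"
  proof -
    have "Suc d \<le> Suc d ^ Suc j" by (rule self_le_power) auto
    then show ?thesis using d1 by (simp add: D_def)
  qed
  have lrnum: "lowrank (Suc d ^ j) R C num"
    unfolding num_def by (rule lowrank_prod[OF Suc.prems(6)]) (use fW cW in auto)
  have lrB: "lowrank D R C B"
  proof -
    have "lowrank (Suc d ^ j) R C (\<lambda>i c. (1 / den c) * num i c)"
      by (rule lowrank_scale[OF lrnum])
    then have "lowrank (Suc d ^ j) R C B" unfolding B_def .
    moreover have "Suc d ^ j \<le> D" unfolding D_def by (simp add: power_increasing)
    ultimately show ?thesis using lowrank_mono by blast
  qed
  have B01: "\<And>i c. i \<in> R \<Longrightarrow> c \<in> C \<Longrightarrow> B i c \<in> {0,1}" using B0 B1 by blast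
  obtain S T where ST: "S \<subseteq> R" "T \<subseteq> C" "colconst B S T"
    "real (card S) * real (card T) \<ge> real (card R) * real (card C) * 2 powr (- poly p2 (log 2 D))"
    using H[unfolded HF_def, rule_format, OF D2 Suc.prems(2-5) B01 lrB] by blast
  define X where "X = real (card R) * real (card C) * 2 powr (- (Q - 1))"
  have Xpos: "X > 0" using Suc.prems(2-5) by (simp add: X_def card_gt_0_iff)
  have "poly p2 (log 2 D) \<le> Q - 1" using Qb[of "Suc j"] Suc.prems(1) by (simp add: D_def)
  then have "2 powr (- (Q - 1)) \<le> 2 powr (- poly p2 (log 2 D))" by (intro powr_mono) auto
  then have "X \<le> real (card R) * real (card C) * 2 powr (- poly p2 (log 2 D))"
    unfolding X_def by (intro mult_left_mono) auto
  with ST(4) have STX: "real (card S) * real (card T) \<ge> X" by linarith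
  have fS: "finite S" "finite T" using ST(1,2) Suc.prems(2,3) finite_subset by auto
  have cSpos: "card S > 0" "card T > 0" using STX Xpos by (auto intro: Nat.gr0I)
  have Sne: "S \<noteq> {}" using cSpos by auto
  define T1 where "T1 = {c\<in>T. \<forall>i\<in>S. F i c = v c}"
  define T0 where "T0 = T - T1"
  have T0prop: "F i c \<noteq> v c" if "c \<in> T0" "i \<in> S" for c i
  proof
    assume Fi: "F i c = v c"
    from that obtain i1 where i1: "i1 \<in> S" "F i1 c \<noteq> v c" by (auto simp: T0_def T1_def)
    have "B i1 c = 0" using B0 i1 ST(1) by blast
    moreover have "B i c = B i1 c" using ST(3) that(2) i1(1) \<open>c \<in> T0\<close> unfolding colconst_def T0_def by blast
    ultimately show False using B1[OF Fi] by simp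
  qed
  have X2: "X / 2 = real (card R) * real (card C) * 2 powr (- Q)"
  proof -
    have "2 powr (- (Q - 1)) = 2 * 2 powr (- Q)" using powr_add[of "2::real" 1 "-Q"] by simp
    then show ?thesis unfolding X_def by simp
  qed
  have fT1: "finite T1" "T1 \<subseteq> T" using fS by (auto simp: T1_def)
  show ?case
  proof (cases "2 * card T1 \<ge> card T")
    case True
    have cc: "colconst F S T1" unfolding colconst_def T1_def by auto
    have "2 * card T1 \<ge> card T" using True by simp
    then have "real (card S) * (2 * real (card T1)) \<ge> real (card S) * real (card T)"
      by (intro mult_left_mono) (simp_all add: of_nat_mult[symmetric] del: of_nat_mult)
    then have "real (card S) * real (card T1) \<ge> X / 2" using STX by simp
    then have "real (card S) * real (card T1) \<ge> real (card R) * real (card C) * 2 powr (- Q)"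
      using X2 by simp
    moreover have "2 powr (- (real (Suc j) * Q)) \<le> 2 powr (- Q)"
      using Q1 by (intro powr_mono) (auto simp: algebra_simps)
    ultimately have "real (card S) * real (card T1) \<ge> real (card R) * real (card C) * 2 powr (- (real (Suc j) * Q))"
      by (smt (verit) mult_left_mono of_nat_0_le_iff zero_le_mult_iff)
    moreover have "T1 \<subseteq> C" using fT1(2) ST(2) by auto
    ultimately show ?thesis using ST(1) cc by blast
  next
    case False
    have cT0: "card T0 = card T - card T1" unfolding T0_def using fT1 by (simp add: card_Diff_subset)
    then have cT0': "2 * card T0 \<ge> card T" using False fT1 card_mono[OF fS(2) fT1(2)] by linarith
    then have T0ne: "T0 \<noteq> {}" using cSpos by auto
    have vals: "\<forall>c\<in>T0. card ((\<lambda>i. F i c) ` S) \<le> j"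
    proof
      fix c assume c: "c \<in> T0"
      then have cC: "c \<in> C" using ST(2) by (auto simp: T0_def)
      have "(\<lambda>i. F i c) ` S \<subseteq> W c" using T0prop[OF c] ST(1) by (auto simp: W_def)
      then have "card ((\<lambda>i. F i c) ` S) \<le> card (W c)" using fW by (rule card_mono[rotated])
      then show "card ((\<lambda>i. F i c) ` S) \<le> j" using cW[OF cC] by simp
    qed
    have T0C: "T0 \<subseteq> C" using ST(2) by (auto simp: T0_def)
    obtain S' T' where ST': "S' \<subseteq> S" "T' \<subseteq> T0" "colconst F S' T'"
      "real (card S') * real (card T') \<ge> real (card S) * real (card T0) * 2 powr (- (real j * Q))"
      using Suc.IH[of S T0, OF _ fS(1) _ Sne T0ne lowrank_sub[OF Suc.prems(6) ST(1) T0C] vals] Suc.prems(1)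
        cSpos fS(2) by (auto simp: T0_def)
    have "2 * card T0 \<ge> card T" using cT0' by simp
    then have "real (card S) * (2 * real (card T0)) \<ge> real (card S) * real (card T)"
      by (intro mult_left_mono) (simp_all add: of_nat_mult[symmetric] del: of_nat_mult)
    then have "real (card S) * real (card T0) \<ge> X / 2" using STX by simp
    then have "real (card S) * real (card T0) \<ge> real (card R) * real (card C) * 2 powr (- Q)"
      using X2 by simp
    then have f1: "real (card S) * real (card T0) * 2 powr (- (real j * Q))
        \<ge> real (card R) * real (card C) * 2 powr (- Q) * 2 powr (- (real j * Q))"
      by (intro mult_right_mono) auto
    have "2 powr (- Q) * 2 powr (- (real j * Q)) = 2 powr (- (real (Suc j) * Q))"
    proof -
      have e: "-Q + -(real j * Q) = -(real (Suc j) * Q)" by (simp add: algebra_simps)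
      show ?thesis by (metis powr_add e)
    qed
    then have "real (card R) * real (card C) * 2 powr (- Q) * 2 powr (- (real j * Q))
        = real (card R) * real (card C) * 2 powr (- (real (Suc j) * Q))"
      by (simp only: mult.assoc)
    then have fin: "real (card S') * real (card T') \<ge> real (card R) * real (card C) * 2 powr (- (real (Suc j) * Q))"
      using ST'(4) f1 by linarith
    have "S' \<subseteq> R" "T' \<subseteq> C" using ST'(1,2) ST(1) T0C by auto
    then show ?thesis using ST'(3) fin by blast
  qed
qed

lemma poly_bound:
  fixes p :: "real poly" and y :: real
  assumes "y \<ge> 1"
  shows "poly p y \<le> (\<Sum>i\<le>degree p. \<bar>coeff p i\<bar>) * y ^ degree p"
proof -
  have "poly p y = (\<Sum>i\<le>degree p. coeff p i * y ^ i)" by (simp add: poly_altdef)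
  also have "\<dots> \<le> (\<Sum>i\<le>degree p. \<bar>coeff p i\<bar> * y ^ degree p)"
  proof (rule sum_mono)
    fix i assume i: "i \<in> {..degree p}"
    have "coeff p i * y ^ i \<le> \<bar>coeff p i\<bar> * y ^ i" using assms
      by (intro mult_right_mono) auto
    also have "\<dots> \<le> \<bar>coeff p i\<bar> * y ^ degree p"
      using assms i by (intro mult_left_mono power_increasing) auto
    finally show "coeff p i * y ^ i \<le> \<bar>coeff p i\<bar> * y ^ degree p" .
  qed
  also have "\<dots> = (\<Sum>i\<le>degree p. \<bar>coeff p i\<bar>) * y ^ degree p" by (simp add: sum_distrib_right)
  finally show ?thesis .
qed

theorem theorem2p10:
  assumes "\<exists>p2 :: real poly. \<forall>d::nat. d \<ge> 2 \<longrightarrow>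
      (\<forall>M :: real mat. dim_row M \<ge> 1 \<longrightarrow> dim_col M \<ge> 1 \<longrightarrow> boolean_mat M \<longrightarrow> mrank M \<le> d \<longrightarrow>
        (\<exists>S T. S \<subseteq> {0..<dim_row M} \<and> T \<subseteq> {0..<dim_col M} \<and> sub_listable1 M S T \<and>
           real (card S * card T) \<ge> real (dim_row M * dim_col M) * 2 powr (- poly p2 (log 2 d))))"
    and "(k::nat) \<ge> 2"
  shows "\<exists>pk :: real poly. \<forall>d::nat. d \<ge> 2 \<longrightarrow>
      (\<forall>M :: real mat. dim_row M \<ge> 1 \<longrightarrow> dim_col M \<ge> 1 \<longrightarrow> listable k M \<longrightarrow> mrank M \<le> d \<longrightarrow>
        (\<exists>S T. S \<subseteq> {0..<dim_row M} \<and> T \<subseteq> {0..<dim_col M} \<and> sub_listable1 M S T \<and>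
           real (card S * card T) \<ge> real (dim_row M * dim_col M) * 2 powr (- poly pk (log 2 d))))"
proof -
  obtain p2 where p2: "\<forall>d::nat. d \<ge> 2 \<longrightarrow>
      (\<forall>M :: real mat. dim_row M \<ge> 1 \<longrightarrow> dim_col M \<ge> 1 \<longrightarrow> boolean_mat M \<longrightarrow> mrank M \<le> d \<longrightarrow>
        (\<exists>S T. S \<subseteq> {0..<dim_row M} \<and> T \<subseteq> {0..<dim_col M} \<and> sub_listable1 M S T \<and>
           real (card S * card T) \<ge> real (dim_row M * dim_col M) * 2 powr (- poly p2 (log 2 d))))"
    using assms(1) by blast
  have H: "HF p2" by (rule HF_intro[OF p2])
  define N where "N = degree p2"
  define A where "A = (\<Sum>i\<le>degree p2. \<bar>coeff p2 i\<bar>)"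
  define K where "K = real k"
  define c where "c = K + K * A * (2 * K) ^ N"
  have A0: "A \<ge> 0" unfolding A_def by (intro sum_nonneg) auto
  have K1: "K \<ge> 1" using assms(2) by (simp add: K_def)
  show ?thesis
  proof (intro exI[of _ "monom c N"] allI impI)
    fix d :: nat and M :: "real mat"
    assume d2: "d \<ge> 2" and n1: "dim_row M \<ge> 1" and m1: "dim_col M \<ge> 1" and lk: "listable k M"
      and rk: "mrank M \<le> d"
    define n where "n = dim_row M"
    define m where "m = dim_col M"
    define x where "x = log 2 (real d)"
    have x1: "x \<ge> 1" using d2 by (simp add: x_def)
    have xN: "x ^ N \<ge> 1" using x1 by (simp add: one_le_power)
    define Q where "Q = 1 + A * (2 * K) ^ N * x ^ N"
    have Q1: "Q \<ge> 1" unfolding Q_def using A0 K1 x1 by simp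
    have Qb: "poly p2 (log 2 (real (Suc d ^ j))) \<le> Q - 1" if j: "1 \<le> j" "j \<le> k" for j
    proof -
      define y where "y = log 2 (real (Suc d ^ j))"
      have y_eq: "y = real j * log 2 (real (Suc d))" by (simp add: y_def log_nat_power)
      have "log 2 (real (Suc d)) \<ge> 1" using d2 by simp
      moreover have "real j \<ge> 1" using j(1) by simp
      ultimately have "1 * 1 \<le> real j * log 2 (real (Suc d))"
        by (intro mult_mono) auto
      then have y1: "y \<ge> 1" using y_eq by simp
      have "log 2 (real (Suc d)) \<le> log 2 (2 * real d)" using d2 by simp
      also have "\<dots> = 1 + x" using d2 by (simp add: x_def log_mult)
      also have "\<dots> \<le> 2 * x" using x1 by simp
      finally have "log 2 (real (Suc d)) \<le> 2 * x" .
      then have "y \<le> K * (2 * x)" unfolding y_eq K_def using j(2) x1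
        by (intro mult_mono) auto
      then have "y ^ N \<le> (K * (2 * x)) ^ N" using y1 by (intro power_mono) auto
      then have "A * y ^ N \<le> A * (K * (2 * x)) ^ N" using A0 by (intro mult_left_mono)
      moreover have "poly p2 y \<le> A * y ^ N" using poly_bound[OF y1] by (simp add: A_def N_def)
      moreover have "A * (K * (2 * x)) ^ N = Q - 1"
        by (simp add: Q_def power_mult_distrib)
      ultimately show ?thesis unfolding y_def by linarith
    qed
    have lr: "lowrank d {0..<n} {0..<m} (\<lambda>i j. M $$ (i,j))"
      using mrank_lowrank[OF rk] by (simp add: n_def m_def atLeast0LessThan)
    have vals: "\<forall>c\<in>{0..<m}. card ((\<lambda>i. M $$ (i,c)) ` {0..<n}) \<le> k"
    proof
      fix j assume j: "j \<in> {0..<m}"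
      have "(\<lambda>i. M $$ (i,j)) ` {0..<n} = {M $$ (i, j) | i. i < dim_row M}"
        by (auto simp: n_def)
      then show "card ((\<lambda>i. M $$ (i,j)) ` {0..<n}) \<le> k"
        using lk j unfolding listable_def m_def by auto
    qed
    have d1: "d \<ge> 1" using d2 by simp
    obtain S T where ST: "S \<subseteq> {0..<n}" "T \<subseteq> {0..<m}" "colconst (\<lambda>i j. M $$ (i,j)) S T"
      "real (card S) * real (card T) \<ge> real (card {0..<n}) * real (card {0..<m}) * 2 powr (- (real k * Q))"
      using main_ind[where k=k, OF H Q1 d1 Qb, where j=k and R="{0..<n}" and C="{0..<m}" and F="\<lambda>i j. M $$ (i,j)"] lr vals n1 m1
      by (auto simp: n_def m_def)
    have "real k * Q \<le> c * x ^ N"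
    proof -
      have "real k * Q = K + K * A * (2 * K) ^ N * x ^ N" by (simp add: Q_def K_def algebra_simps)
      also have "\<dots> \<le> K * x ^ N + K * A * (2 * K) ^ N * x ^ N" using xN K1 by simp
      also have "\<dots> = c * x ^ N" by (simp add: c_def algebra_simps)
      finally show ?thesis .
    qed
    then have "2 powr (- poly (monom c N) x) \<le> 2 powr (- (real k * Q))"
      by (intro powr_mono) (auto simp: poly_monom)
    then have "real (n * m) * 2 powr (- poly (monom c N) x) \<le> real (n * m) * 2 powr (- (real k * Q))"
      by (intro mult_left_mono) auto
    also have "\<dots> \<le> real (card S * card T)" using ST(4) by simp
    finally have "real (card S * card T) \<ge> real (n * m) * 2 powr (- poly (monom c N) x)" .
    moreover have "sub_listable1 M S T" using ST(3) unfolding sub_listable1_def colconst_def by blast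
    ultimately show "\<exists>S T. S \<subseteq> {0..<dim_row M} \<and> T \<subseteq> {0..<dim_col M} \<and> sub_listable1 M S T \<and>
           real (card S * card T) \<ge> real (dim_row M * dim_col M) * 2 powr (- poly (monom c N) (log 2 d))"
      using ST(1,2) by (auto simp: n_def m_def x_def)
  qed
qed

end
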